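(* Let $0<\omega_1<\omega_2<\cdots$, let $(c_j)$ be a real square-summable sequence, $\gamma>0$, and let $$f(\lambda)=\sum_{j=1}^\infty\frac{c_j^2}{\omega_j}\Big(\frac1{\lambda-i\omega_j}-\frac1{\lambda+i\omega_j}\Big)+\frac{2i}{\gamma\lambda}.$$ Fix $k\ge2$ with $\omega_{k+1}-\omega_k>\omega_k-\omega_{k-1}>0$, set $R_0=\omega_k-\omega_{k-1}$, and let $F(\lambda)=(\lambda-i\omega_k)f(\lambda)$, which (after removing the removable singularity at $i\omega_k$) is analytic on $\{|\lambda-i\omega_k|<R_0\}$. Define $\lambda_k^*=i\omega_k-\frac{F(i\omega_k)}{F'(i\omega_k)}$ and, for $|\lambda-i\omega_k|<R_0$, the analytic function $\rho$ by $F(\lambda)=F(i\omega_k)+(\lambda-i\omega_k)F'(i\omega_k)+(\lambda-i\omega_k)^2\rho(\lambda)$. Let $0<R_1<R_0$, $\Gamma_1=\{|\lambda-i\omega_k|\le R_1\}$, $M=\sup_{\lambda\in\Gamma_1}|\rho(\lambda)|$, and let $R_k>0$ be such that the open disk $\Gamma=\{|\lambda-\lambda_k^*|<R_k\}$ satisfies $\Gamma\subset\Gamma_1$. Assume $$0<M<\frac{|F'(i\omega_k)|^2}{4|F(i\omega_k)|}.$$ Let $b=\sqrt{\frac{|F'(i\omega_k)|}{4M}}$ and $c_*=|\lambda_k^*-i\omega_k|=\Big|\frac{F(i\omega_k)}{F'(i\omega_k)}\Big|$. If $\sqrt{R_k}\in\big(b-\sqrt{b^2-c_*},\,b+\sqrt{b^2-c_*}\big)$,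 then $f$ has exactly one zero in $\Gamma$.
   Context: Zeros of $f$ (outside $\{0,\pm i\omega_j\}$) are the eigenvalues of the observer-error generator considered in the paper. *)

theory Defs
  imports "HOL-Complex_Analysis.Complex_Analysis"
begin

text \<open>Sequences omega and c are indexed from 1; the values at index 0 are unused.
  The function f of the paper:
  f(l) = sum_{j>=1} c_j^2/omega_j (1/(l - i omega_j) - 1/(l + i omega_j)) + 2i/(gamma l).\<close>
definition obs_f :: "(nat \<Rightarrow> real) \<Rightarrow> (nat \<Rightarrow> real) \<Rightarrow> real \<Rightarrow> complex \<Rightarrow> complex" where
  "obs_f \<omega> c \<gamma> l =
     (\<Sum>j. complex_of_real (c (Suc j) ^ 2 / \<omega> (Suc j)) *
            (1 / (l - \<i> * complex_of_real (\<omega> (Suc j))) - 1 / (l + \<i> * complex_of_real (\<omega> (Suc j)))))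
     + 2 * \<i> / (complex_of_real \<gamma> * l)"

definition obs_poles :: "(nat \<Rightarrow> real) \<Rightarrow> complex set" where
  "obs_poles \<omega> = {0} \<union> {\<i> * complex_of_real (\<omega> j) | j. j \<ge> 1} \<union> {- \<i> * complex_of_real (\<omega> j) | j. j \<ge> 1}"

end

theory Submission imports Defs begin

lemma omega_mono_aux:
  fixes \<omega> :: "nat \<Rightarrow> real"
  assumes incr: "\<And>j. j \<ge> 1 \<Longrightarrow> \<omega> j < \<omega> (Suc j)" and "1 \<le> i" "i \<le> j"
  shows "\<omega> i \<le> \<omega> j"
  using assms(3)
proof (induction j rule: dec_induct)
  case base then show ?case by simp
next
  case (step n)
  then have "\<omega> n < \<omega> (Suc n)" using incr assms(2) by simp
  with step show ?case by simp
qed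

lemma norm_i_diff: "norm (\<i> * complex_of_real x - \<i> * complex_of_real y) = \<bar>x - y\<bar>"
proof -
  have "\<i> * complex_of_real x - \<i> * complex_of_real y = \<i> * complex_of_real (x - y)" by (simp add: algebra_simps)
  then show ?thesis by (simp only: norm_mult norm_ii norm_of_real mult_1)
qed

lemma norm_i_sum: "norm (\<i> * complex_of_real x + \<i> * complex_of_real y) = \<bar>x + y\<bar>"
proof -
  have "\<i> * complex_of_real x + \<i> * complex_of_real y = \<i> * complex_of_real (x + y)" by (simp add: algebra_simps)
  then show ?thesis by (simp only: norm_mult norm_ii norm_of_real mult_1)
qed

lemma unique_zero_rouche:
  fixes F \<rho> :: "complex \<Rightarrow> complex" and a lstar :: complex and Rz Ro Rk M :: real
  assumes F_holo: "F holomorphic_on ball a Rz"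
    and rho_holo: "\<rho> holomorphic_on ball a Rz"
    and rho_eq: "\<And>l. l \<in> ball a Rz \<Longrightarrow> F l = F a + (l - a) * deriv F a + (l - a)\<^sup>2 * \<rho> l"
    and Ro: "0 < Ro" "Ro < Rz"
    and M_def: "M = (SUP l\<in>cball a Ro. norm (\<rho> l))"
    and Rk_pos: "Rk > 0"
    and Gamma_sub: "ball lstar Rk \<subseteq> cball a Ro"
    and M_lt: "M * (Rk + norm (lstar - a))\<^sup>2 < norm (deriv F a) * Rk"
    and lstar_def: "lstar = a - F a / deriv F a"
    and A0: "F a \<noteq> 0" and B0: "deriv F a \<noteq> 0"
  shows "\<exists>!z. z \<in> ball lstar Rk \<and> F z = 0"
proof -
  define A where "A = F a"
  define B where "B = deriv F a"
  define f where "f = (\<lambda>z. B * (z - lstar))"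
  define g where "g = (\<lambda>z. (z - a)\<^sup>2 * \<rho> z)"
  define G where "G = (\<lambda>p. f p + g p)"
  define R2 where "R2 = (Ro + Rz) / 2"
  define S where "S = ball a R2"
  have R2: "Ro < R2" "R2 < Rz" using Ro by (auto simp: R2_def)
  have SRz: "S \<subseteq> ball a Rz" using R2 by (auto simp: S_def)
  have GF: "G z = F z" if "z \<in> ball a Rz" for z
  proof -
    have "B * (z - lstar) = A + (z - a) * B" using B0
      by (simp add: lstar_def A_def B_def algebra_simps)
    then show ?thesis using rho_eq[OF that] unfolding G_def f_def g_def A_def B_def
      by simp
  qed
  have clos: "cball lstar Rk \<subseteq> cball a Ro"
  proof -
    have "closure (ball lstar Rk) \<subseteq> cball a Ro"
      using Gamma_sub by (simp add: closure_minimal)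
    thus ?thesis using Rk_pos by simp
  qed
  have cRoS: "cball a Ro \<subseteq> S" using R2 by (auto simp: S_def)
  have rho_cont: "continuous_on (cball a Ro) \<rho>"
  proof -
    have "continuous_on (ball a Rz) \<rho>" by (rule holomorphic_on_imp_continuous_on[OF rho_holo])
    moreover have "cball a Ro \<subseteq> ball a Rz" using cRoS SRz by blast
    ultimately show ?thesis by (rule continuous_on_subset)
  qed
  have bdd: "bdd_above ((\<lambda>l. norm (\<rho> l)) ` cball a Ro)"
  proof -
    have "continuous_on (cball a Ro) (\<lambda>l. norm (\<rho> l))"
      using rho_cont by (intro continuous_intros)
    then have "compact ((\<lambda>l. norm (\<rho> l)) ` cball a Ro)"
      by (intro compact_continuous_image) auto
    then show ?thesis by (intro bounded_imp_bdd_above compact_imp_bounded)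
  qed
  have rhoM: "norm (\<rho> z) \<le> M" if "z \<in> cball a Ro" for z
    unfolding M_def using bdd that by (rule cSUP_upper2) simp
  have M0: "0 \<le> M" using rhoM[of a] Ro by (meson norm_ge_zero order_trans centre_in_cball less_imp_le)
  have less: "norm (g z) < norm (f z)" if "z \<in> sphere lstar Rk" for z
  proof -
    have zc: "z \<in> cball a Ro" using clos that by auto
    have "norm (z - a) \<le> norm (z - lstar) + norm (lstar - a)"
      using norm_triangle_ineq[of "z - lstar" "lstar - a"] by simp
    also have "\<dots> = Rk + norm (lstar - a)" using that by (simp add: dist_norm norm_minus_commute)
    finally have d: "norm (z - a) \<le> Rk + norm (lstar - a)" .
    have "norm (g z) = norm (z - a) ^ 2 * norm (\<rho> z)" by (simp add: g_def norm_mult norm_power)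
    also have "\<dots> \<le> (Rk + norm (lstar - a))^2 * M"
      by (intro mult_mono power_mono d rhoM zc) auto
    also have "\<dots> < norm B * Rk" using M_lt by (simp add: B_def mult.commute)
    also have "\<dots> = norm (f z)" using that by (simp add: f_def norm_mult dist_norm norm_minus_commute)
    finally show ?thesis .
  qed
  have G_holo: "G holomorphic_on ball a Rz"
    unfolding G_def f_def g_def using rho_holo by (intro holomorphic_intros) auto
  have G_nconst: "\<not> G constant_on ball a Rz"
  proof
    assume "G constant_on ball a Rz"
    then obtain c where c: "\<And>z. z \<in> ball a Rz \<Longrightarrow> G z = c" by (auto simp: constant_on_def)
    have "(F has_field_derivative 0) (at a)"
    proof (rule has_field_derivative_transform_within_open[of "\<lambda>_. c" _ _ "ball a Rz"])
      show "((\<lambda>_. c) has_field_derivative 0) (at a)" by simp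
    qed (use Ro c GF in auto)
    then have "deriv F a = 0" by (rule DERIV_imp_deriv)
    with B0 show False by simp
  qed
  have finG: "finite {p\<in>S. G p = 0}"
  proof -
    have "finite {z\<in>cball a R2. G z = 0}"
      by (rule holomorphic_compact_finite_zeros[OF G_holo]) (use R2 G_nconst in auto)
    then show ?thesis by (rule rev_finite_subset) (auto simp: S_def)
  qed
  have zf: "{p\<in>S. f p = 0} = {lstar}"
  proof -
    have "lstar \<in> cball lstar Rk" using Rk_pos by simp
    then have "lstar \<in> S" using clos cRoS by blast
    then show ?thesis using B0 by (auto simp: f_def B_def)
  qed
  have R: "(\<Sum>p\<in>{p\<in>S. G p = 0}. winding_number (circlepath lstar Rk) p * zorder G p)
          = (\<Sum>p\<in>{p\<in>S. f p = 0}. winding_number (circlepath lstar Rk) p * zorder f p)"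
    unfolding G_def
  proof (rule Rouche_theorem)
    show "open S" "connected S" by (auto simp: S_def)
    show "finite {p \<in> S. f p + g p = 0}" using finG by (simp add: G_def)
    show "finite {p \<in> S. f p = 0}" using zf by simp
    show "f holomorphic_on S" unfolding f_def by (intro holomorphic_intros)
    show "g holomorphic_on S" unfolding g_def using rho_holo SRz
      by (intro holomorphic_intros) (auto intro: holomorphic_on_subset)
    show "path_image (circlepath lstar Rk) \<subseteq> S" using Rk_pos clos cRoS by auto
    show "\<forall>z\<in>path_image (circlepath lstar Rk). cmod (g z) < cmod (f z)" using less Rk_pos by auto
    show "\<forall>z. z \<notin> S \<longrightarrow> winding_number (circlepath lstar Rk) z = 0"
    proof (intro allI impI)
      fix z assume "z \<notin> S"
      then have "z \<notin> cball lstar Rk" using clos cRoS by auto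
      then show "winding_number (circlepath lstar Rk) z = 0"
        by (intro winding_number_zero_outside[of _ "cball lstar Rk"]) (use Rk_pos in \<open>auto simp: valid_path_imp_path\<close>)
    qed
  qed auto
  have zo: "zorder f lstar = 1"
    by (rule zorder_eqI[of UNIV _ "\<lambda>_. B"]) (use B0 in \<open>auto simp: f_def B_def\<close>)
  have RHS: "(\<Sum>p\<in>{p\<in>S. f p = 0}. winding_number (circlepath lstar Rk) p * zorder f p) = 1"
    using zf zo Rk_pos by (simp add: winding_number_circlepath_centre)
  define Z where "Z = {p\<in>S. G p = 0}"
  define Zin where "Zin = {p\<in>S. G p = 0} \<inter> ball lstar Rk"
  have Zin_eq: "Zin = {z \<in> ball lstar Rk. F z = 0}"
  proof -
    have "x \<in> S \<and> G x = F x" if "x \<in> ball lstar Rk" for x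
      using that Gamma_sub cRoS SRz GF by blast
    then show ?thesis unfolding Zin_def by fastforce
  qed
  have wn: "winding_number (circlepath lstar Rk) p = (if p \<in> ball lstar Rk then 1 else 0)" if "p \<in> Z" for p
  proof (cases "p \<in> ball lstar Rk")
    case True then show ?thesis
      by (simp add: winding_number_circlepath dist_norm norm_minus_commute)
  next
    case False
    have "p \<notin> sphere lstar Rk"
    proof
      assume "p \<in> sphere lstar Rk"
      from less[OF this] have "norm (g p) < norm (f p)" .
      moreover have "f p = - g p" using that by (simp add: Z_def G_def eq_neg_iff_add_eq_0)
      ultimately show False by simp
    qed
    with False have "p \<notin> cball lstar Rk" by auto
    then have "winding_number (circlepath lstar Rk) p = 0"
      by (intro winding_number_zero_outside[of _ "cball lstar Rk"]) (use Rk_pos in \<open>auto simp: valid_path_imp_path\<close>)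
    with False show ?thesis by simp
  qed
  have "(\<Sum>p\<in>Z. winding_number (circlepath lstar Rk) p * zorder G p) = (\<Sum>p\<in>Z. if p \<in> ball lstar Rk then of_int (zorder G p) else 0)"
    by (rule sum.cong) (auto simp: wn)
  also have "\<dots> = (\<Sum>p\<in>{x\<in>Z. x \<in> ball lstar Rk}. of_int (zorder G p))"
    by (rule sum.inter_filter[symmetric]) (use finG in \<open>simp add: Z_def\<close>)
  also have "{x\<in>Z. x \<in> ball lstar Rk} = Zin" by (auto simp: Z_def Zin_def)
  finally have "(\<Sum>p\<in>Zin. of_int (zorder G p)) = (1::complex)"
    using R RHS by (simp add: Z_def)
  then have sum1: "(\<Sum>p\<in>Zin. zorder G p) = 1"
    by (metis of_int_eq_1_iff of_int_sum)
  have pos: "zorder G p \<ge> 1" if "p \<in> Zin" for p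
  proof -
    have pS: "p \<in> ball a Rz" using that Gamma_sub cRoS SRz by (auto simp: Zin_def)
    have "\<forall>\<^sub>F w in at p. G w \<noteq> 0 \<and> w \<in> ball a Rz"
      by (rule non_zero_neighbour_alt[OF G_holo _ _ pS, of a]) (use Ro A0 GF in \<open>auto simp: A_def\<close>)
    then have "frequently (\<lambda>w. G w \<noteq> 0) (at p)"
      by (auto intro: eventually_frequently elim: eventually_mono)
    then have "zorder G p > 0"
      using zorder_pos_iff[OF G_holo _ pS] that by (auto simp: Zin_def)
    then show ?thesis by simp
  qed
  have finZin: "finite Zin" using finG by (simp add: Zin_def)
  have "int (card Zin) \<le> (\<Sum>p\<in>Zin. zorder G p)"
    using sum_mono[of Zin "\<lambda>_. 1::int" "zorder G"] pos by simp
  then have c1: "card Zin \<le> 1" using sum1 by simp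
  have "Zin \<noteq> {}" using sum1 by auto
  then have "card Zin = 1" using c1 finZin by (simp add: Suc_leI card_gt_0_iff le_antisym)
  then obtain z where "Zin = {z}" by (auto simp: card_Suc_eq)
  then show ?thesis unfolding Zin_eq by (auto simp: set_eq_iff)
qed

theorem lemma3p1:
  fixes \<omega> c :: "nat \<Rightarrow> real" and \<gamma> :: real and k :: nat
    and F \<rho> :: "complex \<Rightarrow> complex"
    and R0 R1 Rk M b cst :: real and lstar :: complex
  assumes omega_pos: "0 < \<omega> 1"
    and omega_incr: "\<And>j. j \<ge> 1 \<Longrightarrow> \<omega> j < \<omega> (Suc j)"
    and c_sq_summable: "summable (\<lambda>j. (c (Suc j))\<^sup>2)"
    and gamma_pos: "\<gamma> > 0"
    and k_ge: "k \<ge> 2"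
    and gaps: "\<omega> (Suc k) - \<omega> k > \<omega> k - \<omega> (k - 1)" "\<omega> k - \<omega> (k - 1) > 0"
    and R0_def: "R0 = \<omega> k - \<omega> (k - 1)"
    and F_holo: "F holomorphic_on ball (\<i> * \<omega> k) R0"
    and F_eq: "\<And>l. l \<in> ball (\<i> * \<omega> k) R0 \<Longrightarrow> l \<noteq> \<i> * \<omega> k \<Longrightarrow>
                  F l = (l - \<i> * \<omega> k) * obs_f \<omega> c \<gamma> l"
    and lstar_def: "lstar = \<i> * \<omega> k - F (\<i> * \<omega> k) / deriv F (\<i> * \<omega> k)"
    and rho_holo: "\<rho> holomorphic_on ball (\<i> * \<omega> k) R0"
    and rho_eq: "\<And>l. l \<in> ball (\<i> * \<omega> k) R0 \<Longrightarrow>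
                  F l = F (\<i> * \<omega> k) + (l - \<i> * \<omega> k) * deriv F (\<i> * \<omega> k)
                        + (l - \<i> * \<omega> k)\<^sup>2 * \<rho> l"
    and R1: "0 < R1" "R1 < R0"
    and M_def: "M = (SUP l\<in>cball (\<i> * \<omega> k) R1. norm (\<rho> l))"
    and Rk_pos: "Rk > 0"
    and Gamma_sub: "ball lstar Rk \<subseteq> cball (\<i> * \<omega> k) R1"
    and M_bounds: "0 < M" "M < (norm (deriv F (\<i> * \<omega> k)))\<^sup>2 / (4 * norm (F (\<i> * \<omega> k)))"
    and b_def: "b = sqrt (norm (deriv F (\<i> * \<omega> k)) / (4 * M))"
    and cst_def: "cst = norm (F (\<i> * \<omega> k) / deriv F (\<i> * \<omega> k))"
    and Rk_range: "b - sqrt (b\<^sup>2 - cst) < sqrt Rk" "sqrt Rk < b + sqrt (b\<^sup>2 - cst)"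
  shows "\<exists>!z. z \<in> ball lstar Rk \<and> z \<notin> obs_poles \<omega> \<and> obs_f \<omega> c \<gamma> z = 0"
proof -
  define a where "a = \<i> * complex_of_real (\<omega> k)"
  have mono: "\<omega> i \<le> \<omega> j" if "1 \<le> i" "i \<le> j" for i j
    using omega_mono_aux[of \<omega>, OF omega_incr that] .
  have k1: "1 \<le> k - 1" using k_ge by simp
  have "\<omega> 1 \<le> \<omega> (k - 1)" by (rule mono[OF order_refl k1])
  then have wk1: "\<omega> (k - 1) > 0" using omega_pos by linarith
  have R0pos: "R0 > 0" using gaps R0_def by simp
  have poles: "z = a" if "z \<in> ball a R0" "z \<in> obs_poles \<omega>" for z
  proof -
    have d: "norm (a - z) < R0" using that(1) by (simp add: dist_norm)
    have "z = 0 \<or> (\<exists>j\<ge>1. z = \<i> * complex_of_real (\<omega> j)) \<or> (\<exists>j\<ge>1. z = - \<i> * complex_of_real (\<omega> j))"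
      using that(2) unfolding obs_poles_def by (simp only: Un_iff mem_Collect_eq singleton_iff) blast
    then consider "z = 0" | j where "j \<ge> 1" "z = \<i> * complex_of_real (\<omega> j)"
      | j where "j \<ge> 1" "z = - \<i> * complex_of_real (\<omega> j)"
      by blast
    then show ?thesis
    proof cases
      case 1
      have "norm a = \<omega> k" using wk1 gaps by (simp add: a_def norm_mult)
      then show ?thesis using d 1 wk1 R0_def by simp
    next
      case (2 j)
      have nd: "norm (a - z) = \<bar>\<omega> k - \<omega> j\<bar>" using 2 by (simp add: a_def norm_i_diff)
      consider "j < k" | "j = k" | "j > k" by linarith
      then show ?thesis
      proof cases
        case 1
        then have "\<omega> j \<le> \<omega> (k - 1)" using mono[of j "k - 1"] 2 by simp
        then show ?thesis using d nd R0_def by simp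
      next
        case 3
        then have "\<omega> (Suc k) \<le> \<omega> j" using mono[of "Suc k" j] by simp
        then show ?thesis using d nd R0_def gaps by simp
      qed (use 2 a_def in simp)
    next
      case (3 j)
      have nd: "norm (a - z) = \<bar>\<omega> k + \<omega> j\<bar>" using 3 by (simp add: a_def norm_i_sum del: of_real_add)
      have "\<omega> j > 0" using mono[of 1 j] omega_pos 3 by simp
      then show ?thesis using d nd R0_def wk1 gaps by simp
    qed
  qed
  define A where "A = F a"
  define B where "B = deriv F a"
  have A0: "A \<noteq> 0"
  proof
    assume "A = 0" then show False using M_bounds by (simp add: A_def a_def)
  qed
  have B0: "B \<noteq> 0"
  proof
    assume "B = 0" then show False using M_bounds by (simp add: B_def a_def)
  qed
  have nA: "norm A > 0" "norm B > 0" using A0 B0 by auto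
  have cst_eq: "cst = norm A / norm B" using cst_def by (simp add: A_def B_def a_def norm_divide)
  have b0: "b \<ge> 0" using b_def M_bounds(1) by simp
  have b2: "b^2 = norm B / (4 * M)" using b_def M_bounds by (simp add: B_def a_def)
  have Mlt: "M * (4 * norm A) < (norm B)^2"
    using M_bounds(2) nA by (simp add: A_def B_def a_def pos_less_divide_eq)
  have bc: "cst < b^2"
    unfolding cst_eq b2 using Mlt nA M_bounds(1) by (simp add: field_simps power2_eq_square)
  define s where "s = sqrt Rk"
  have s0: "s > 0" "s^2 = Rk" using Rk_pos by (auto simp: s_def)
  have "\<bar>s - b\<bar> < sqrt (b^2 - cst)" using Rk_range by (simp add: s_def abs_less_iff)
  then have "\<bar>s - b\<bar>^2 < (sqrt (b^2 - cst))^2"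
    by (intro power_strict_mono) auto
  then have "(s - b)^2 < b^2 - cst" using bc by simp
  then have lt1: "Rk + cst < 2 * b * s" using s0 by (simp add: power2_eq_square algebra_simps)
  have cst0: "cst \<ge> 0" using cst_def by simp
  have "(Rk + cst)^2 < (2 * b * s)^2"
    using lt1 Rk_pos cst0 by (intro power_strict_mono) auto
  also have "\<dots> = 4 * b^2 * Rk" using s0 by (simp add: power_mult_distrib)
  finally have "M * (Rk + cst)^2 < M * (4 * b^2 * Rk)" using M_bounds(1) by simp
  also have "\<dots> = norm B * Rk" using b2 M_bounds(1) by simp
  finally have key: "M * (Rk + cst)^2 < norm B * Rk" .
  have nl: "norm (lstar - a) = cst"
    using lstar_def cst_def by (simp add: a_def norm_minus_commute)
  have U: "\<exists>!z. z \<in> ball lstar Rk \<and> F z = 0"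
  proof (rule unique_zero_rouche[where Rz = R0 and Ro = R1 and M = M and \<rho> = \<rho>])
    show "M * (Rk + cmod (lstar - a))\<^sup>2 < cmod (deriv F a) * Rk" using key nl by (simp add: B_def)
    show "F holomorphic_on ball a R0" using F_holo by (simp add: a_def)
    show "\<rho> holomorphic_on ball a R0" using rho_holo by (simp add: a_def)
    show "\<And>l. l \<in> ball a R0 \<Longrightarrow> F l = F a + (l - a) * deriv F a + (l - a)\<^sup>2 * \<rho> l"
      using rho_eq unfolding a_def by blast
    show "M = (SUP l\<in>cball a R1. cmod (\<rho> l))" using M_def by (simp add: a_def)
    show "ball lstar Rk \<subseteq> cball a R1" using Gamma_sub by (simp add: a_def)
    show "lstar = a - F a / deriv F a" using lstar_def by (simp add: a_def)
    show "F a \<noteq> 0" using A0 by (simp add: A_def)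
    show "deriv F a \<noteq> 0" using B0 by (simp add: B_def)
  qed (use R1 Rk_pos in auto)
  have sub: "ball lstar Rk \<subseteq> ball a R0" using Gamma_sub R1 by (auto simp: a_def)
  have aP: "a \<in> obs_poles \<omega>" using k_ge unfolding obs_poles_def a_def by auto
  have equiv: "(z \<notin> obs_poles \<omega> \<and> obs_f \<omega> c \<gamma> z = 0) \<longleftrightarrow> F z = 0" if "z \<in> ball lstar Rk" for z
  proof
    assume h: "z \<notin> obs_poles \<omega> \<and> obs_f \<omega> c \<gamma> z = 0"
    then have "z \<noteq> a" using aP by auto
    then show "F z = 0" using F_eq[of z] sub that h by (auto simp: a_def)
  next
    assume h: "F z = 0"
    then have za: "z \<noteq> a" using A0 by (auto simp: A_def)
    then have "(z - a) * obs_f \<omega> c \<gamma> z = 0" using F_eq[of z] sub that h by (auto simp: a_def)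
    then have "obs_f \<omega> c \<gamma> z = 0" using za by simp
    moreover have "z \<notin> obs_poles \<omega>" using poles[of z] sub that za by auto
    ultimately show "z \<notin> obs_poles \<omega> \<and> obs_f \<omega> c \<gamma> z = 0" by simp
  qed
  show ?thesis using U equiv by metis
qed

end
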